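(* Let $D$ be a square-free integer and let $N>1$ be an odd square-free composite integer such that $\gcd(N, D)=1$. Then $N$ is a $\mathcal{G}(D)$-Carmichael number if and only if $\mathcal{F}_D(q) \mid \mathcal{F}_D(N)$ for every prime $q \mid N$.
   Context: For an integer $n \ge 2$ with $\gcd(n,D)=1$, $\mathcal{F}_D(n) := n - \left(\frac{D}{n}\right)$, where $\left(\frac{D}{n}\right)$ is the Kronecker symbol. For an integer $n \ge 2$ and a square-free integer $D$: if $D \equiv 2,3 \pmod 4$, let $\mathcal{I}_n(D) = \{a + b\sqrt{D} : a,b \in \mathbb{Z}/n\mathbb{Z}\}$ and $\mathcal{G}_n(D) = \{a + b\sqrt{D} \in \mathcal{I}_n(D) : a^2 - Db^2 \equiv 1 \pmod n\}$; if $D \equiv 1 \pmod 4$, let $\omega = \frac{1+\sqrt D}{2}$, $\mathcal{I}_n(D) = \{a + b\omega : a,b \in \mathbb{Z}/n\mathbb{Z}\}$ and $\mathcal{G}_n(D) = \{a + b\omega \in \mathcal{I}_n(D) : a^2 + ab + \frac{1-D}{4} b^2 \equiv 1 \pmod n\}$; $\mathcal{I}_n(D)$ is the ring $\mathcal{O}_L/n\mathcal{O}_L$, $L=\mathbb{Q}(\sqrt D)$, and $x \equiv y \pmod n$ means equality in $\mathcal{I}_n(D)$. For an odd composite integer $N$ with $\gcd(N,D)=1$: $N$ is a $\mathcal{G}(D)$-pseudoprime to base $\alpha \in \mathcal{G}_N(D)\setminus\{1,-1\}$ if $\alpha^{\mathcal{F}_D(N)} \equiv 1 \pmod N$; $N$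 is a $\mathcal{G}(D)$-Carmichael number if it is a $\mathcal{G}(D)$-pseudoprime to every base, i.e. $\alpha^{\mathcal{F}_D(N)} \equiv 1 \pmod N$ for every $\alpha \in \mathcal{G}_N(D)$. *)

theory Defs
  imports "HOL-Number_Theory.Number_Theory" "HOL-Computational_Algebra.Squarefree"
begin

definition kronecker_prime :: "int \<Rightarrow> nat \<Rightarrow> int" where
  "kronecker_prime D p =
     (if p = 2 then (if even D then 0 else if D mod 8 = 1 \<or> D mod 8 = 7 then 1 else -1)
      else Legendre D (int p))"

definition kronecker :: "int \<Rightarrow> nat \<Rightarrow> int" where
  "kronecker D n = (\<Prod>p\<in>prime_factors n. kronecker_prime D p ^ multiplicity p n)"

definition FD :: "int \<Rightarrow> nat \<Rightarrow> int" where
  "FD D n = int n - kronecker D n"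

text \<open>A pair (a,b) stands for a + b sqrt D if D \<equiv> 2,3 mod 4, and for a + b \<omega>,
  \<omega> = (1 + sqrt D)/2, if D \<equiv> 1 mod 4 (then \<omega>^2 = \<omega> + (D-1)/4).\<close>
definition qmult :: "int \<Rightarrow> int \<times> int \<Rightarrow> int \<times> int \<Rightarrow> int \<times> int" where
  "qmult D x y = (case x of (a, b) \<Rightarrow> case y of (c, d) \<Rightarrow>
     (if D mod 4 = 1 then (a * c + b * d * ((D - 1) div 4), a * d + b * c + b * d)
      else (a * c + D * b * d, a * d + b * c)))"

definition qpow :: "int \<Rightarrow> int \<times> int \<Rightarrow> nat \<Rightarrow> int \<times> int" where
  "qpow D x k = (qmult D x ^^ k) (1, 0)"

definition qnorm :: "int \<Rightarrow> int \<times> int \<Rightarrow> int" where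
  "qnorm D x = (case x of (a, b) \<Rightarrow>
     (if D mod 4 = 1 then a^2 + a * b + ((1 - D) div 4) * b^2 else a^2 - D * b^2))"

definition qcong :: "nat \<Rightarrow> int \<times> int \<Rightarrow> int \<times> int \<Rightarrow> bool" where
  "qcong n x y = ([fst x = fst y] (mod int n) \<and> [snd x = snd y] (mod int n))"

definition G_set :: "int \<Rightarrow> nat \<Rightarrow> (int \<times> int) set" where
  "G_set D n = {(a, b). 0 \<le> a \<and> a < int n \<and> 0 \<le> b \<and> b < int n \<and>
                        [qnorm D (a, b) = 1] (mod int n)}"

definition G_carmichael :: "int \<Rightarrow> nat \<Rightarrow> bool" where
  "G_carmichael D N \<longleftrightarrow> odd N \<and> N > 1 \<and> \<not> prime N \<and> coprime (int N) D \<and>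
     (\<forall>\<alpha>\<in>G_set D N. qcong N (qpow D \<alpha> (nat (FD D N))) (1, 0))"

end

theory Submission
  imports Defs "HOL-Algebra.Multiplicative_Group" "HOL-Computational_Algebra.Polynomial"
begin
definition sm :: "int \<Rightarrow> int \<times> int \<Rightarrow> int \<times> int \<Rightarrow> int \<times> int" where
  "sm d x y = (fst x * fst y + d * snd x * snd y, fst x * snd y + snd x * fst y)"

definition sp :: "int \<Rightarrow> int \<times> int \<Rightarrow> nat \<Rightarrow> int \<times> int" where
  "sp d x n = (sm d x ^^ n) (1, 0)"

definition snorm :: "int \<Rightarrow> int \<times> int \<Rightarrow> int" where
  "snorm d x = fst x ^ 2 - d * snd x ^ 2"

definition sconj :: "int \<times> int \<Rightarrow> int \<times> int" where
  "sconj x = (fst x, - snd x)"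

definition pcong :: "int \<Rightarrow> int \<times> int \<Rightarrow> int \<times> int \<Rightarrow> bool" where
  "pcong m x y \<longleftrightarrow> [fst x = fst y] (mod m) \<and> [snd x = snd y] (mod m)"

lemma sp_0 [simp]: "sp d x 0 = (1, 0)" by (simp add: sp_def)
lemma sp_Suc: "sp d x (Suc n) = sm d x (sp d x n)" by (simp add: sp_def)

lemma sm_comm: "sm d x y = sm d y x" by (simp add: sm_def algebra_simps)
lemma sm_assoc: "sm d (sm d x y) z = sm d x (sm d y z)" by (simp add: sm_def algebra_simps)
lemma sm_one [simp]: "sm d x (1,0) = x" "sm d (1,0) x = x" by (simp_all add: sm_def)
lemma sp_1 [simp]: "sp d x 1 = x" by (simp add: sp_def)

lemma sp_add: "sp d x (m + n) = sm d (sp d x m) (sp d x n)"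
  by (induction m) (simp_all add: sp_Suc sm_assoc)

lemma sp_mult: "sp d x (m * n) = sp d (sp d x m) n"
  by (induction n) (simp_all add: sp_Suc sp_add sm_comm)

lemma sp_one [simp]: "sp d (1,0) n = (1,0)"
  by (induction n) (simp_all add: sp_Suc)

lemma sm_sconj: "sm d x (sconj x) = (snorm d x, 0)"
  by (simp add: sm_def sconj_def snorm_def power2_eq_square algebra_simps)

lemma snorm_mult: "snorm d (sm d x y) = snorm d x * snorm d y"
  by (simp add: sm_def snorm_def power2_eq_square algebra_simps)

lemma snorm_one [simp]: "snorm d (1,0) = 1" by (simp add: snorm_def)

lemma snorm_sp: "snorm d (sp d x n) = snorm d x ^ n"
  by (induction n) (simp_all add: sp_Suc snorm_mult)

lemma snorm_sconj [simp]: "snorm d (sconj x) = snorm d x"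
  by (simp add: sconj_def snorm_def)

lemma pcong_refl [simp]: "pcong m x x" by (simp add: pcong_def)
lemma pcong_sym: "pcong m x y \<Longrightarrow> pcong m y x" by (auto simp: pcong_def cong_sym)
lemma pcong_trans: "pcong m x y \<Longrightarrow> pcong m y z \<Longrightarrow> pcong m x z"
  by (auto simp: pcong_def intro: cong_trans)

lemma pcong_sm: "pcong m x x' \<Longrightarrow> pcong m y y' \<Longrightarrow> pcong m (sm d x y) (sm d x' y')"
  unfolding pcong_def sm_def by (auto intro!: cong_add cong_mult)

lemma pcong_sp: "pcong m x x' \<Longrightarrow> pcong m (sp d x n) (sp d x' n)"
  by (induction n) (simp_all add: sp_Suc pcong_sm)

lemma pcong_dvd: "pcong m x y \<Longrightarrow> k dvd m \<Longrightarrow> pcong k x y"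
  unfolding pcong_def using cong_dvd_modulus by blast

lemma snorm_pcong: "pcong m x y \<Longrightarrow> [snorm d x = snorm d y] (mod m)"
  unfolding pcong_def snorm_def by (auto intro!: cong_diff cong_mult cong_pow)

lemma freshman:
  fixes a b :: "'a::comm_ring_1"
  assumes p: "prime p"
  shows "\<exists>z. (a + b) ^ p = a ^ p + b ^ p + of_nat p * z"
proof -
  let ?f = "\<lambda>k. of_nat (p choose k) * a ^ k * b ^ (p - k) :: 'a"
  have p0: "p > 0" using p prime_gt_0_nat by blast
  have set: "{..p} = insert 0 (insert p {1..<p})" using p0 by auto
  have "(a + b) ^ p = (\<Sum>k\<le>p. ?f k)" by (rule binomial_ring)
  also have "\<dots> = ?f 0 + (?f p + (\<Sum>k\<in>{1..<p}. ?f k))"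
    unfolding set using p0 by (simp add: sum.insert)
  also have "(\<Sum>k\<in>{1..<p}. ?f k) = of_nat p * (\<Sum>k\<in>{1..<p}. of_nat ((p choose k) div p) * a ^ k * b ^ (p - k))"
    unfolding sum_distrib_left
  proof (rule sum.cong[OF refl])
    fix k assume k: "k \<in> {1..<p}"
    have "p dvd p choose k" using k p0 by (intro dvd_choose_prime p) auto
    then have "p choose k = p * ((p choose k) div p)" by simp
    then have "(of_nat (p choose k) :: 'a) = of_nat p * of_nat ((p choose k) div p)"
      by (metis of_nat_mult)
    then show "?f k = of_nat p * (of_nat ((p choose k) div p) * a ^ k * b ^ (p - k))"
      by (simp add: mult.assoc)
  qed
  finally have "(a + b) ^ p = a ^ p + b ^ p + of_nat p * (\<Sum>k\<in>{1..<p}. of_nat ((p choose k) div p) * a ^ k * b ^ (p - k))"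
    using p0 by (simp add: algebra_simps)
  then show ?thesis by blast
qed

lemma pow_mod_sum:
  fixes m c :: "'a::comm_ring_1"
  shows "\<exists>w. (m + c) ^ n = m * w + c ^ n"
proof (induction n)
  case 0 then show ?case by (auto intro: exI[of _ 0])
next
  case (Suc n)
  then obtain w where "(m + c) ^ n = m * w + c ^ n" by blast
  then have "(m + c) ^ Suc n = m * ((m + c) * w + c ^ n) + c ^ Suc n"
    by (simp add: algebra_simps)
  then show ?case by blast
qed

definition P :: "int \<times> int \<Rightarrow> int poly" where
  "P x = [:fst x, snd x:]"

definition mpoly :: "int \<Rightarrow> int poly" where
  "mpoly d = [:-d, 0, 1:]"

lemma P_mult: "P x * P y = mpoly d * [:snd x * snd y:] + P (sm d x y)"
  by (simp add: P_def mpoly_def sm_def algebra_simps)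

lemma P_one [simp]: "P (1, 0) = 1" by (simp add: P_def one_pCons)

lemma P_pow: "\<exists>w. P x ^ n = mpoly d * w + P (sp d x n)"
proof (induction n)
  case 0 then show ?case by (auto intro: exI[of _ 0])
next
  case (Suc n)
  then obtain w where w: "P x ^ n = mpoly d * w + P (sp d x n)" by blast
  have "P x ^ Suc n = P x * (mpoly d * w + P (sp d x n))" using w by simp
  also have "\<dots> = mpoly d * (P x * w) + P x * P (sp d x n)" by (simp add: algebra_simps)
  also have "\<dots> = mpoly d * (P x * w + [:snd x * snd (sp d x n):]) + P (sp d x (Suc n))"
    by (simp add: P_mult[of _ _ d] sp_Suc algebra_simps)
  finally show ?case by blast
qed

lemma degree_mpoly [simp]: "degree (mpoly d) = 2" by (simp add: mpoly_def)

lemma lin_zero: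
  assumes "degree f \<le> 1" "f = mpoly d * h"
  shows "f = 0"
proof (rule ccontr)
  assume "f \<noteq> 0"
  then have "h \<noteq> 0" using assms by auto
  moreover have "mpoly d \<noteq> 0" by (simp add: mpoly_def)
  ultimately have "degree f = 2 + degree h" using assms(2) by (simp add: degree_mult_eq)
  then show False using assms(1) by simp
qed

lemma mpoly_monic: "coeff (mpoly d) (degree (mpoly d)) = 1" by (simp add: mpoly_def)

lemma frob_exact:
  assumes q: "prime q" "odd q"
  shows "\<exists>z1 z2. sp d (u, v) q = (u ^ q + int q * z1, v ^ q * d ^ ((q - 1) div 2) + int q * z2)"
proof -
  define M where "M = mpoly d"
  define n where "n = (q - 1) div 2"
  have qn: "q = Suc (2 * n)" using q(2) unfolding n_def by presburger
  obtain w0 where A: "P (u, v) ^ q = M * w0 + P (sp d (u, v) q)" using P_pow unfolding M_def by blast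
  have Puv: "P (u, v) = [:u:] + [:v:] * [:0, 1:]" by (simp add: P_def)
  obtain Z where B: "([:u:] + [:v:] * [:0, 1:]) ^ q = [:u:] ^ q + ([:v:] * [:0, 1:]) ^ q + of_nat q * Z"
    using freshman[OF q(1)] by blast
  have X2: "[:0, 1:] ^ 2 = M + [:d:]" by (simp add: M_def mpoly_def power2_eq_square)
  obtain w2 where W2: "(M + [:d:]) ^ n = M * w2 + [:d:] ^ n" using pow_mod_sum by blast
  have "([:v:] * [:0, 1:]) ^ q = [:v ^ q:] * ([:0, 1:] * ([:0, 1:] ^ 2) ^ n)"
    unfolding power_mult_distrib poly_const_pow by (simp only: qn power_Suc power_mult)
  also have "\<dots> = M * ([:v ^ q:] * [:0, 1:] * w2) + [:0, v ^ q * d ^ n:]"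
    unfolding X2 W2 by (simp add: poly_const_pow algebra_simps)
  finally have C: "([:v:] * [:0, 1:]) ^ q = M * ([:v ^ q:] * [:0, 1:] * w2) + [:0, v ^ q * d ^ n:]" .
  obtain Q R where QR: "pseudo_divmod Z M = (Q, R)" by (cases "pseudo_divmod Z M") auto
  have M0: "M \<noteq> 0" by (simp add: M_def mpoly_def)
  have ZQR: "Z = M * Q + R" using pseudo_divmod(1)[OF M0 QR] mpoly_monic[of d] by (simp add: M_def)
  have degR: "degree R \<le> 1" using pseudo_divmod(2)[OF M0 QR] by (auto simp: M_def)
  define f where "f = P (sp d (u, v) q) - [:u ^ q, v ^ q * d ^ n:] - smult (int q) R"
  have "M * w0 + P (sp d (u, v) q) = M * ([:v ^ q:] * [:0, 1:] * w2 + smult (int q) Q) + [:u ^ q, v ^ q * d ^ n:] + smult (int q) R"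
  proof -
    have "M * w0 + P (sp d (u, v) q) = [:u:] ^ q + ([:v:] * [:0, 1:]) ^ q + of_nat q * Z"
      using A B unfolding Puv by simp
    also have "\<dots> = [:u ^ q:] + (M * ([:v ^ q:] * [:0, 1:] * w2) + [:0, v ^ q * d ^ n:]) + smult (int q) (M * Q + R)"
      unfolding C ZQR by (simp add: poly_const_pow of_nat_poly)
    also have "\<dots> = M * ([:v ^ q:] * [:0, 1:] * w2 + smult (int q) Q) + [:u ^ q, v ^ q * d ^ n:] + smult (int q) R"
      by (simp add: algebra_simps smult_add_right)
    finally show ?thesis .
  qed
  then have "f = M * ([:v ^ q:] * [:0, 1:] * w2 + smult (int q) Q - w0)"
    unfolding f_def by (simp add: algebra_simps)
  moreover have "degree f \<le> 1" unfolding f_def using degR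
    by (intro degree_diff_le) (auto simp: P_def intro: degree_diff_le order.trans[OF degree_smult_le])
  ultimately have "f = 0" using lin_zero unfolding M_def by blast
  then have "coeff f 0 = 0" "coeff f 1 = 0" by auto
  then have "fst (sp d (u, v) q) = u ^ q + int q * coeff R 0" "snd (sp d (u, v) q) = v ^ q * d ^ n + int q * coeff R 1"
    unfolding f_def by (simp_all add: P_def)
  then show ?thesis unfolding n_def by (metis prod.collapse)
qed


lemma fermat_int:
  fixes u :: int
  assumes q: "prime q"
  shows "[u ^ q = u] (mod int q)"
proof (cases "int q dvd u")
  case True
  then have "[u = 0] (mod int q)" by (simp add: cong_0_iff)
  moreover have "[u ^ q = 0 ^ q] (mod int q)" using calculation by (rule cong_pow)
  moreover have "(0::int) ^ q = 0" using q prime_gt_0_nat by simp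
  ultimately have "[u ^ q = 0] (mod int q)" by simp
  then show ?thesis using cong_trans cong_sym \<open>[u = 0] (mod int q)\<close> by blast
next
  case False
  define k where "k = nat (u mod int q)"
  have q0: "int q > 0" using q prime_gt_0_nat by simp
  have uk: "[u = int k] (mod int q)" unfolding k_def using q0 by (simp add: cong_def)
  have "\<not> q dvd k"
  proof
    assume "q dvd k"
    then have "int q dvd int k" by simp
    then have "int q dvd u" using cong_dvd_iff[OF uk] by simp
    then show False using False by simp
  qed
  then have "[k ^ (q - 1) = 1] (mod q)" using fermat_theorem q by blast
  then have "[k ^ (q - 1) * k = 1 * k] (mod q)" by (rule cong_mult) simp
  moreover have "k ^ (q - 1) * k = k ^ q"
  proof -
    have "q = Suc (q - 1)" using q prime_gt_0_nat by simp
    then show ?thesis by (metis power_Suc2)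
  qed
  ultimately have "[k ^ q = k] (mod q)" by simp
  then have "[int k ^ q = int k] (mod int q)" using cong_int_iff[of "k ^ q" k q] by simp
  moreover have "[u ^ q = int k ^ q] (mod int q)" using uk by (rule cong_pow)
  ultimately have "[u ^ q = int k] (mod int q)" by (metis cong_trans)
  then show ?thesis using cong_sym[OF uk] by (rule cong_trans)
qed

lemma frob:
  assumes q: "prime q" "2 < q"
  shows "pcong (int q) (sp d (u, v) q) (u, Legendre d (int q) * v)"
proof -
  have oq: "odd q" using q prime_odd_nat by blast
  obtain z1 z2 where Z: "sp d (u, v) q = (u ^ q + int q * z1, v ^ q * d ^ ((q - 1) div 2) + int q * z2)"
    using frob_exact[OF q(1) oq] by blast
  have e: "[Legendre d (int q) = d ^ ((q - 1) div 2)] (mod int q)" using euler_criterion q by blast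
  have "[u ^ q + int q * z1 = u ^ q] (mod int q)" by (simp add: cong_def)
  then have 1: "[u ^ q + int q * z1 = u] (mod int q)" using fermat_int[OF q(1), of u] by (rule cong_trans)
  have "[v ^ q * d ^ ((q - 1) div 2) + int q * z2 = v ^ q * d ^ ((q - 1) div 2)] (mod int q)" by (simp add: cong_def)
  moreover have "[v ^ q * d ^ ((q - 1) div 2) = v * Legendre d (int q)] (mod int q)"
    using fermat_int[OF q(1), of v] cong_sym[OF e] by (rule cong_mult)
  ultimately have "[v ^ q * d ^ ((q - 1) div 2) + int q * z2 = v * Legendre d (int q)] (mod int q)"
    by (rule cong_trans)
  then have 2: "[v ^ q * d ^ ((q - 1) div 2) + int q * z2 = Legendre d (int q) * v] (mod int q)"
    by (simp add: mult.commute)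
  show ?thesis using 1 2 Z by (simp add: pcong_def)
qed

lemma Legendre_cases:
  assumes "\<not> int q dvd d"
  shows "Legendre d (int q) = 1 \<or> Legendre d (int q) = -1"
  using assms by (auto simp: Legendre_def cong_0_iff)

lemma sp_Suc': "sp d x (Suc n) = sm d (sp d x n) x"
  by (simp add: sp_Suc sm_comm)

lemma order_sm:
  assumes q: "prime q" "2 < q" and nd: "\<not> int q dvd d"
    and N: "[snorm d y = 1] (mod int q)"
  shows "pcong (int q) (sp d y (nat (int q - Legendre d (int q)))) (1, 0)"
proof -
  obtain a b where y: "y = (a, b)" by (cases y)
  have F: "pcong (int q) (sp d y q) (a, Legendre d (int q) * b)" using frob[OF q] y by simp
  have Nc: "pcong (int q) (snorm d y, 0) (1, 0)" using N by (simp add: pcong_def)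
  from Legendre_cases[OF nd] show ?thesis
  proof
    assume L: "Legendre d (int q) = 1"
    have e: "nat (int q - Legendre d (int q)) = q - 1" using L by simp
    have qs: "q = Suc (q - 1)" using q by simp
    have "sp d y q = sm d (sp d y (q - 1)) y" by (subst qs) (simp add: sp_Suc')
    then have A: "pcong (int q) (sm d (sp d y (q - 1)) y) y" using F L y by simp
    have "pcong (int q) (sm d (sm d (sp d y (q - 1)) y) (sconj y)) (sm d y (sconj y))"
      using A by (rule pcong_sm) simp
    then have B: "pcong (int q) (sm d (sp d y (q - 1)) (snorm d y, 0)) (snorm d y, 0)"
      by (simp add: sm_assoc sm_sconj)
    have C: "pcong (int q) (sm d (sp d y (q - 1)) (snorm d y, 0)) (sp d y (q - 1))"
      using pcong_sm[OF pcong_refl Nc, of d "sp d y (q - 1)"] by simp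
    show ?thesis unfolding e using pcong_trans[OF pcong_trans[OF pcong_sym[OF C] B] Nc] .
  next
    assume L: "Legendre d (int q) = -1"
    have e: "nat (int q - Legendre d (int q)) = Suc q" using L by simp
    have A: "pcong (int q) (sp d y q) (sconj y)" using F L y by (simp add: sconj_def)
    have "pcong (int q) (sm d (sp d y q) y) (sm d (sconj y) y)" using A by (rule pcong_sm) simp
    then have "pcong (int q) (sp d y (Suc q)) (snorm d y, 0)"
      by (simp add: sp_Suc' sm_comm[of d "sconj y"] sm_sconj)
    then show ?thesis unfolding e using Nc by (rule pcong_trans)
  qed
qed

lemma fermat_int1:
  fixes a :: int
  assumes q: "prime q" and nd: "\<not> int q dvd a"
  shows "[a ^ (q - 1) = 1] (mod int q)"
proof -
  define k where "k = nat (a mod int q)"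
  have q0: "int q > 0" using q prime_gt_0_nat by simp
  have ak: "[a = int k] (mod int q)" unfolding k_def using q0 by (simp add: cong_def)
  have "\<not> q dvd k"
  proof
    assume "q dvd k"
    then have "int q dvd int k" by simp
    then have "int q dvd a" using cong_dvd_iff[OF ak] by simp
    then show False using nd by simp
  qed
  then have "[k ^ (q - 1) = 1] (mod q)" using fermat_theorem q by blast
  then have "[int k ^ (q - 1) = 1] (mod int q)" using cong_int_iff[of "k ^ (q - 1)" 1 q] by simp
  moreover have "[a ^ (q - 1) = int k ^ (q - 1)] (mod int q)" using ak by (rule cong_pow)
  ultimately show ?thesis by (metis cong_trans)
qed

lemma cong_of_dvd_diff: "(m::int) dvd a - b \<Longrightarrow> [a = b] (mod m)"
  by (simp add: cong_iff_dvd_diff)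

lemma prime_int_dvd_mult: "prime (q::nat) \<Longrightarrow> int q dvd a * b \<Longrightarrow> int q dvd a \<or> int q dvd b"
  by (simp add: prime_dvd_mult_iff prime_nat_int_transfer)

lemma split_gen:
  assumes q: "prime q" "2 < q" and nd: "\<not> int q dvd d" and L: "Legendre d (int q) = 1"
  shows "\<exists>y. [snorm d y = 1] (mod int q) \<and> (\<forall>e. pcong (int q) (sp d y e) (1, 0) \<longrightarrow> (q - 1) dvd e)"
proof -
  have "QuadRes (int q) d" using L by (auto simp: Legendre_def split: if_splits)
  then obtain r where r: "[r ^ 2 = d] (mod int q)" unfolding QuadRes_def by blast
  have rd: "int q dvd r ^ 2 - d" using r by (simp add: cong_iff_dvd_diff)
  have r0: "\<not> int q dvd r"
  proof
    assume "int q dvd r"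
    then have "int q dvd r ^ 2" by (simp add: power2_eq_square)
    then have "int q dvd r ^ 2 - (r ^ 2 - d)" using rd by (rule dvd_diff)
    then have "int q dvd d" by simp
    then show False using nd by simp
  qed
  have q1: "1 < q" using q by simp
  obtain g where g: "residue_primroot q g" using prime_primitive_root_exists[OF q1 q(1)] by blast
  have ordg: "ord q g = q - 1" and cop: "coprime q g"
    using g q(1) by (auto simp: residue_primroot_def totient_prime)
  define G where "G = int g"
  have G0: "\<not> int q dvd G"
  proof
    assume "int q dvd G"
    then have "q dvd g" unfolding G_def by simp
    then have "q dvd gcd q g" by simp
    then show False using cop q1 by simp
  qed
  define \<chi> where "\<chi> x = fst x + snd x * r" for x :: "int \<times> int"
  have chim: "[\<chi> (sm d x z) = \<chi> x * \<chi> z] (mod int q)" for x z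
  proof -
    have "\<chi> x * \<chi> z - \<chi> (sm d x z) = snd x * snd z * (r ^ 2 - d)"
      by (simp add: \<chi>_def sm_def power2_eq_square algebra_simps)
    then have "int q dvd \<chi> x * \<chi> z - \<chi> (sm d x z)" using rd by simp
    then show ?thesis by (simp add: cong_iff_dvd_diff dvd_diff_commute)
  qed
  have chip: "[\<chi> (sp d x e) = \<chi> x ^ e] (mod int q)" for x e
  proof (induction e)
    case 0 then show ?case by (simp add: \<chi>_def)
  next
    case (Suc e)
    have "[\<chi> x * \<chi> (sp d x e) = \<chi> x * \<chi> x ^ e] (mod int q)" using Suc by (rule cong_mult[OF cong_refl])
    from cong_trans[OF chim[of x "sp d x e"] this] show ?case by (simp add: sp_Suc)
  qed
  have chic: "pcong (int q) x x' \<Longrightarrow> [\<chi> x = \<chi> x'] (mod int q)" for x x'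
    unfolding pcong_def \<chi>_def by (auto intro!: cong_add cong_mult)
  define w where "w = (r * (G + 1), G - 1)"
  define y where "y = sm d w (sp d (sconj w) (q - 2))"
  have chw: "\<chi> w = 2 * r * G" and chcw: "\<chi> (sconj w) = 2 * r"
    by (simp_all add: \<chi>_def w_def sconj_def algebra_simps)
  have "[\<chi> y = \<chi> w * \<chi> (sp d (sconj w) (q - 2))] (mod int q)" unfolding y_def by (rule chim)
  also have "[\<chi> w * \<chi> (sp d (sconj w) (q - 2)) = \<chi> w * \<chi> (sconj w) ^ (q - 2)] (mod int q)"
    by (rule cong_mult[OF cong_refl chip])
  also have "\<chi> w * \<chi> (sconj w) ^ (q - 2) = G * (2 * r) ^ (q - 1)"
  proof -
    have "q - 1 = Suc (q - 2)" using q by simp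
    then show ?thesis unfolding chw chcw by (simp add: algebra_simps)
  qed
  also have "[G * (2 * r) ^ (q - 1) = G * 1] (mod int q)"
  proof (rule cong_mult[OF cong_refl fermat_int1[OF q(1)]])
    show "\<not> int q dvd 2 * r"
    proof
      assume "int q dvd 2 * r"
      then have "int q dvd 2 \<or> int q dvd r" by (rule prime_int_dvd_mult[OF q(1)])
      then show False using r0 q(2) by (auto dest: zdvd_imp_le)
    qed
  qed
  finally have chy: "[\<chi> y = G] (mod int q)" by simp
  have "snorm d y = snorm d w ^ (q - 1)"
  proof -
    have "q - 1 = Suc (q - 2)" using q by simp
    then show ?thesis unfolding y_def by (simp add: snorm_mult snorm_sp)
  qed
  moreover have "\<not> int q dvd snorm d w"
  proof
    assume a: "int q dvd snorm d w"
    have "snorm d w - 4 * d * G = (G + 1) ^ 2 * (r ^ 2 - d)"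
      by (simp add: snorm_def w_def power2_eq_square algebra_simps)
    then have "int q dvd snorm d w - 4 * d * G" using rd by simp
    then have "int q dvd snorm d w - (snorm d w - 4 * d * G)" using a dvd_diff by blast
    then have "int q dvd (4 * d) * G" by simp
    then have "int q dvd 4 * d \<or> int q dvd G" by (rule prime_int_dvd_mult[OF q(1)])
    moreover have "\<not> int q dvd 4 * d"
    proof
      assume "int q dvd 4 * d"
      then have "int q dvd 4 \<or> int q dvd d" by (rule prime_int_dvd_mult[OF q(1)])
      moreover have "\<not> int q dvd 4"
      proof
        assume "int q dvd 4"
        then have "q dvd 4" by presburger
        then have "q dvd 2 * 2" by simp
        then have "q dvd 2" using q(1) prime_dvd_mult_iff by blast
        then show False using q(2) by (auto dest: dvd_imp_le)
      qed
      ultimately show False using nd by blast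
    qed
    ultimately show False using G0 by blast
  qed
  ultimately have ny: "[snorm d y = 1] (mod int q)" using fermat_int1[OF q(1)] by simp
  have "(q - 1) dvd e" if e: "pcong (int q) (sp d y e) (1, 0)" for e
  proof -
    have "[\<chi> (sp d y e) = 1] (mod int q)" using chic[OF e] by (simp add: \<chi>_def)
    moreover have "[\<chi> (sp d y e) = G ^ e] (mod int q)"
      using cong_trans[OF chip[of y e] cong_pow[OF chy, of e]] .
    ultimately have "[G ^ e = 1] (mod int q)" using cong_trans cong_sym by blast
    then have "[g ^ e = 1] (mod q)" unfolding G_def using cong_int_iff[of "g ^ e" 1 q] by simp
    then have "ord q g dvd e" by (simp add: ord_divides')
    then show ?thesis using ordg by simp
  qed
  then show ?thesis using ny by blast
qed

definition red :: "int \<Rightarrow> int \<times> int \<Rightarrow> int \<times> int" where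
  "red m x = (fst x mod m, snd x mod m)"

definition padd :: "int \<times> int \<Rightarrow> int \<times> int \<Rightarrow> int \<times> int" where
  "padd x y = (fst x + fst y, snd x + snd y)"

definition FR :: "int \<Rightarrow> int \<Rightarrow> (int \<times> int) ring" where
  "FR d m = \<lparr>carrier = {0..<m} \<times> {0..<m}, mult = (\<lambda>x y. red m (sm d x y)), one = (1, 0),
            zero = (0, 0), add = (\<lambda>x y. red m (padd x y))\<rparr>"

lemma red_eq_iff: "red m x = red m y \<longleftrightarrow> pcong m x y"
  by (auto simp: red_def pcong_def cong_def prod_eq_iff)

lemma pcong_red: "pcong m (red m x) x"
  by (simp add: red_def pcong_def cong_def)

lemma red_in: "m > 0 \<Longrightarrow> red m x \<in> {0..<m} \<times> {0..<m}"
  by (simp add: red_def)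

lemma red_id: "x \<in> {0..<m} \<times> {0..<m} \<Longrightarrow> red m x = x"
  by (auto simp: red_def)

lemma pcong_padd: "pcong m x x' \<Longrightarrow> pcong m y y' \<Longrightarrow> pcong m (padd x y) (padd x' y')"
  unfolding pcong_def padd_def by (auto intro: cong_add)

lemma sm_padd: "sm d (padd x y) z = padd (sm d x z) (sm d y z)"
  by (simp add: sm_def padd_def algebra_simps)

lemma FR_simps [simp]:
  "carrier (FR d m) = {0..<m} \<times> {0..<m}"
  "mult (FR d m) x y = red m (sm d x y)"
  "one (FR d m) = (1, 0)"
  "zero (FR d m) = (0, 0)"
  "add (FR d m) x y = red m (padd x y)"
  by (simp_all add: FR_def)

lemma FR_cring:
  assumes m: "m > 1"
  shows "cring (FR d m)"
proof (rule cringI)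
  have m0: "m > 0" using m by simp
  note rr = pcong_red red_eq_iff red_in[OF m0] red_id
  show "abelian_group (FR d m)"
  proof (rule abelian_groupI, goal_cases)
    case (1 x y) then show ?case using m0 by (simp add: red_in)
  next
    case 2 then show ?case using m0 by simp
  next
    case (3 x y z)
    have "pcong m (padd (red m (padd x y)) z) (padd x (red m (padd y z)))"
      by (rule pcong_trans[OF pcong_padd[OF pcong_red pcong_refl]])
         (rule pcong_sym[OF pcong_trans[OF pcong_padd[OF pcong_refl pcong_red]]], simp add: padd_def algebra_simps)
    then show ?case by (simp add: red_eq_iff)
  next
    case (4 x y) then show ?case by (simp add: padd_def add.commute)
  next
    case (5 x) then show ?case by (simp add: padd_def red_id)
  next
    case (6 x)
    show ?case
    proof (intro bexI)
      show "red m (- fst x, - snd x) \<in> carrier (FR d m)" using m0 by (simp add: red_in)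
      have "pcong m (padd (red m (- fst x, - snd x)) x) (padd (- fst x, - snd x) x)"
        by (rule pcong_padd[OF pcong_red pcong_refl])
      then have "pcong m (padd (red m (- fst x, - snd x)) x) (0, 0)" by (simp add: padd_def)
      then show "red m (- fst x, - snd x) \<oplus>\<^bsub>FR d m\<^esub> x = \<zero>\<^bsub>FR d m\<^esub>"
        by (simp add: red_eq_iff[symmetric]) (simp add: red_def)
    qed
  qed
  show "comm_monoid (FR d m)"
  proof (rule comm_monoidI, goal_cases)
    case (1 x y) then show ?case using m0 by (simp add: red_in)
  next
    case 2 then show ?case using m by simp
  next
    case (3 x y z)
    have "pcong m (sm d (red m (sm d x y)) z) (sm d x (red m (sm d y z)))"
      by (rule pcong_trans[OF pcong_sm[OF pcong_red pcong_refl]])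
         (rule pcong_sym[OF pcong_trans[OF pcong_sm[OF pcong_refl pcong_red]]], simp add: sm_assoc)
    then show ?case by (simp add: red_eq_iff)
  next
    case (4 x) then show ?case by (simp add: red_id)
  next
    case (5 x y) then show ?case by (simp add: sm_comm)
  qed
  show "(x \<oplus>\<^bsub>FR d m\<^esub> y) \<otimes>\<^bsub>FR d m\<^esub> z = x \<otimes>\<^bsub>FR d m\<^esub> z \<oplus>\<^bsub>FR d m\<^esub> y \<otimes>\<^bsub>FR d m\<^esub> z"
    if "x \<in> carrier (FR d m)" "y \<in> carrier (FR d m)" "z \<in> carrier (FR d m)" for x y z
  proof -
    have "pcong m (sm d (red m (padd x y)) z) (padd (red m (sm d x z)) (red m (sm d y z)))"
      by (rule pcong_trans[OF pcong_sm[OF pcong_red pcong_refl]])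
         (rule pcong_sym[OF pcong_trans[OF pcong_padd[OF pcong_red pcong_red]]], simp add: sm_padd)
    then show ?thesis by (simp add: red_eq_iff)
  qed
qed

lemma snorm_nz:
  assumes q: "prime q" "2 < q" and nd: "\<not> int q dvd d" and L: "Legendre d (int q) = -1"
    and a: "a \<in> {0..<int q} \<times> {0..<int q}" "a \<noteq> (0, 0)"
  shows "\<not> int q dvd snorm d a"
proof
  assume dv: "int q dvd snorm d a"
  obtain a1 a2 where aa: "a = (a1, a2)" by (cases a)
  show False
  proof (cases "int q dvd a2")
    case True
    then have "int q dvd d * a2 ^ 2" by (simp add: power2_eq_square)
    then have "int q dvd snorm d a + d * a2 ^ 2" using dv by (rule dvd_add[rotated])
    then have "int q dvd a1 * a1" by (simp add: snorm_def aa power2_eq_square)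
    then have "int q dvd a1" using prime_int_dvd_mult[OF q(1)] by blast
    then have "a1 = 0" "a2 = 0" using a True by (auto simp: aa dest: zdvd_imp_le)
    then show False using a aa by simp
  next
    case False
    define y where "y = a1 * a2 ^ (q - 2)"
    have "[a1 ^ 2 = d * a2 ^ 2] (mod int q)" using dv by (simp add: snorm_def aa cong_iff_dvd_diff)
    moreover have "y ^ 2 = a1 ^ 2 * a2 ^ (2 * (q - 2))" unfolding y_def
      by (simp add: power_mult_distrib mult.commute flip: power_mult)
    ultimately have "[y ^ 2 = d * a2 ^ 2 * a2 ^ (2 * (q - 2))] (mod int q)"
      using cong_mult[OF _ cong_refl, of "a1 ^ 2" "d * a2 ^ 2" "int q" "a2 ^ (2 * (q - 2))"] by simp
    moreover have "d * a2 ^ 2 * a2 ^ (2 * (q - 2)) = d * (a2 ^ (q - 1)) ^ 2"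
    proof -
      have "2 + 2 * (q - 2) = (q - 1) * 2" using q by simp
      then show ?thesis by (simp add: mult.assoc flip: power_add power_mult)
    qed
    moreover have "[d * (a2 ^ (q - 1)) ^ 2 = d * 1 ^ 2] (mod int q)"
      by (intro cong_mult cong_refl cong_pow fermat_int1[OF q(1) False])
    ultimately have "[y ^ 2 = d] (mod int q)" using cong_trans by fastforce
    then have "QuadRes (int q) d" unfolding QuadRes_def by blast
    then show False using L by (simp add: Legendre_def split: if_splits)
  qed
qed

lemma FR_field:
  assumes q: "prime q" "2 < q" and nd: "\<not> int q dvd d" and L: "Legendre d (int q) = -1"
  shows "field (FR d (int q))"
proof -
  have m: "int q > 1" using q by simp
  interpret cring "FR d (int q)" by (rule FR_cring[OF m])
  show ?thesis
  proof (rule cring_fieldI2)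
    show "\<zero>\<^bsub>FR d (int q)\<^esub> \<noteq> \<one>\<^bsub>FR d (int q)\<^esub>" by simp
    fix a assume a: "a \<in> carrier (FR d (int q))" "a \<noteq> \<zero>\<^bsub>FR d (int q)\<^esub>"
    define n where "n = snorm d a"
    have nn: "\<not> int q dvd n" unfolding n_def using snorm_nz[OF q nd L] a by simp
    define b where "b = red (int q) (sm d (n ^ (q - 2), 0) (sconj a))"
    show "\<exists>b\<in>carrier (FR d (int q)). a \<otimes>\<^bsub>FR d (int q)\<^esub> b = \<one>\<^bsub>FR d (int q)\<^esub>"
    proof (intro bexI)
      show "b \<in> carrier (FR d (int q))" unfolding b_def using m by (simp add: red_in)
      have "pcong (int q) (sm d a b) (sm d a (sm d (n ^ (q - 2), 0) (sconj a)))"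
        unfolding b_def by (rule pcong_sm[OF pcong_refl pcong_red])
      also have "sm d a (sm d (n ^ (q - 2), 0) (sconj a)) = sm d (n ^ (q - 2), 0) (n, 0)"
        unfolding n_def by (metis sm_assoc sm_comm sm_sconj)
      also have "\<dots> = (n ^ (q - 1), 0)"
      proof -
        have "q - 1 = Suc (q - 2)" using q by simp
        then show ?thesis by (simp add: sm_def mult.commute)
      qed
      finally have "pcong (int q) (sm d a b) (n ^ (q - 1), 0)" .
      moreover have "pcong (int q) (n ^ (q - 1), 0) (1, 0)"
        using fermat_int1[OF q(1) nn] by (simp add: pcong_def)
      ultimately have "pcong (int q) (sm d a b) (1, 0)" by (rule pcong_trans)
      then have "red (int q) (sm d a b) = red (int q) (1, 0)" by (simp add: red_eq_iff)
      then show "a \<otimes>\<^bsub>FR d (int q)\<^esub> b = \<one>\<^bsub>FR d (int q)\<^esub>" using m by (simp add: red_def)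
    qed
  qed
qed

lemma FR_pow:
  assumes m: "m > 1" and x: "x \<in> carrier (FR d m)"
  shows "x [^]\<^bsub>FR d m\<^esub> (n::nat) = red m (sp d x n)"
proof (induction n)
  case 0 then show ?case using m by (simp add: red_def)
next
  case (Suc n)
  have "pcong m (sm d (red m (sp d x n)) x) (sm d (sp d x n) x)"
    by (rule pcong_sm[OF pcong_red pcong_refl])
  then show ?case using Suc by (simp add: red_eq_iff sp_Suc')
qed

lemma inert_gen:
  assumes q: "prime q" "2 < q" and nd: "\<not> int q dvd d" and L: "Legendre d (int q) = -1"
  shows "\<exists>y. [snorm d y = 1] (mod int q) \<and> (\<forall>e. pcong (int q) (sp d y e) (1, 0) \<longrightarrow> (q + 1) dvd e)"
proof -
  define R where "R = FR d (int q)"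
  have m: "int q > 1" using q by simp
  interpret field R unfolding R_def by (rule FR_field[OF q nd L])
  have fin: "finite (carrier R)" by (simp add: R_def)
  interpret G: group "mult_of R" by (rule field_mult_group)
  have cardR: "Coset.order R = q * q"
    by (simp add: R_def Coset.order_def card_cartesian_product)
  obtain a where a: "a \<in> carrier (mult_of R)" and gen: "carrier (mult_of R) = {a [^]\<^bsub>R\<^esub> i | i::nat. i \<in> UNIV}"
    using finite_field_mult_group_has_gen[OF fin] by blast
  have finG: "finite (carrier (mult_of R))" using fin by (rule finite_mult_of)
  define K where "K = q * q - 1"
  have ordG: "Coset.order (mult_of R) = K" using order_mult_of[OF fin] cardR K_def by simp
  have "carrier (mult_of R) = (\<lambda>x. a [^]\<^bsub>mult_of R\<^esub> x) ` {0 .. G.ord a - 1}"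
    using G.ord_elems[OF finG a] gen by (auto simp: nat_pow_mult_of)
  then have "K \<le> card {0 .. G.ord a - 1}" unfolding ordG[symmetric] Coset.order_def
    by (metis card_image_le finite_atLeastAtMost)
  moreover have "G.ord a dvd K" using G.ord_dvd_group_order[OF a] ordG by simp
  moreover have "K > 0" unfolding K_def using q by (simp add: one_less_mult)
  ultimately have ordK: "G.ord a = K"
    by (metis G.ord_ge_1[OF finG a] card_atLeastAtMost diff_Suc_1 Suc_diff_1 dvd_imp_le le_antisym less_le_trans zero_less_one minus_nat.diff_0)
  have aR: "a \<in> carrier R" using a by simp
  have powR: "a [^]\<^bsub>mult_of R\<^esub> n = red (int q) (sp d a n)" for n
    using FR_pow[OF m, of a d n] aR by (simp add: nat_pow_mult_of R_def)
  have key: "pcong (int q) (sp d a n) (1, 0) \<longleftrightarrow> K dvd n" for n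
  proof -
    have "pcong (int q) (sp d a n) (1, 0) \<longleftrightarrow> red (int q) (sp d a n) = red (int q) (1, 0)"
      by (simp add: red_eq_iff)
    also have "red (int q) (1, 0) = \<one>\<^bsub>mult_of R\<^esub>" using m by (simp add: red_def R_def)
    also have "red (int q) (sp d a n) = a [^]\<^bsub>mult_of R\<^esub> n" by (simp add: powR)
    finally show ?thesis using G.pow_eq_id[OF a] ordK by simp
  qed
  define y where "y = sp d a (q - 1)"
  have Kf: "K = (q - 1) * (q + 1)" unfolding K_def by (simp add: algebra_simps)
  obtain y1 y2 where yy: "y = (y1, y2)" by (cases y)
  have F: "pcong (int q) (sp d y q) (sconj y)" using frob[OF q, of d y1 y2] L yy by (simp add: sconj_def)
  have "pcong (int q) (sm d (sp d y q) y) (sm d (sconj y) y)" using F by (rule pcong_sm) simp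
  then have A: "pcong (int q) (sp d y (Suc q)) (snorm d y, 0)"
    by (simp add: sp_Suc' sm_comm[of d "sconj y"] sm_sconj)
  have "sp d y (Suc q) = sp d a K" unfolding y_def Kf sp_mult by simp
  then have "pcong (int q) (sp d y (Suc q)) (1, 0)" using key[of K] by simp
  then have "pcong (int q) (snorm d y, 0) (1, 0)" using A by (meson pcong_sym pcong_trans)
  then have ny: "[snorm d y = 1] (mod int q)" by (simp add: pcong_def)
  have "(q + 1) dvd e" if e: "pcong (int q) (sp d y e) (1, 0)" for e
  proof -
    have "K dvd (q - 1) * e" using key[of "(q - 1) * e"] e unfolding y_def by (simp add: sp_mult)
    then have "(q - 1) * (q + 1) dvd (q - 1) * e" unfolding Kf .
    moreover have "q - 1 \<noteq> 0" using q by simp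
    ultimately show ?thesis using dvd_times_left_cancel_iff[of "q - 1" "q + 1" e] by simp
  qed
  then show ?thesis using ny by blast
qed

lemma gen_sm:
  assumes q: "prime q" "2 < q" and nd: "\<not> int q dvd d"
  shows "\<exists>y. [snorm d y = 1] (mod int q) \<and>
    (\<forall>e. pcong (int q) (sp d y e) (1, 0) \<longrightarrow> nat (int q - Legendre d (int q)) dvd e)"
  using Legendre_cases[OF nd]
proof
  assume L: "Legendre d (int q) = 1"
  have "nat (int q - Legendre d (int q)) = q - 1" using L by simp
  then show ?thesis using split_gen[OF q nd L] by simp
next
  assume L: "Legendre d (int q) = -1"
  have "nat (int q - Legendre d (int q)) = q + 1" using L by simp
  then show ?thesis using inert_gen[OF q nd L] by simp
qed

definition gm :: "int \<Rightarrow> int \<Rightarrow> int \<times> int \<Rightarrow> int \<times> int \<Rightarrow> int \<times> int" where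
  "gm c0 c1 x y = (fst x * fst y + c0 * snd x * snd y, fst x * snd y + snd x * fst y + c1 * snd x * snd y)"

definition gp :: "int \<Rightarrow> int \<Rightarrow> int \<times> int \<Rightarrow> nat \<Rightarrow> int \<times> int" where
  "gp c0 c1 x n = (gm c0 c1 x ^^ n) (1, 0)"

definition gnorm :: "int \<Rightarrow> int \<Rightarrow> int \<times> int \<Rightarrow> int" where
  "gnorm c0 c1 x = fst x ^ 2 + c1 * fst x * snd x - c0 * snd x ^ 2"

definition TM :: "int \<Rightarrow> int \<Rightarrow> int \<times> int \<Rightarrow> int \<times> int" where
  "TM m c1 x = (fst x + ((m + 1) div 2) * c1 * snd x, ((m + 1) div 2) * snd x)"

lemma gp_0 [simp]: "gp c0 c1 x 0 = (1, 0)" by (simp add: gp_def)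
lemma gp_Suc: "gp c0 c1 x (Suc n) = gm c0 c1 x (gp c0 c1 x n)" by (simp add: gp_def)

lemma gm_comm: "gm c0 c1 x y = gm c0 c1 y x" by (simp add: gm_def algebra_simps)
lemma gm_assoc: "gm c0 c1 (gm c0 c1 x y) z = gm c0 c1 x (gm c0 c1 y z)" by (simp add: gm_def algebra_simps)
lemma gm_one [simp]: "gm c0 c1 x (1,0) = x" "gm c0 c1 (1,0) x = x" by (simp_all add: gm_def)

lemma gp_add: "gp c0 c1 x (m + n) = gm c0 c1 (gp c0 c1 x m) (gp c0 c1 x n)"
  by (induction m) (simp_all add: gp_Suc gm_assoc)

lemma gp_mult: "gp c0 c1 x (m * n) = gp c0 c1 (gp c0 c1 x m) n"
  by (induction n) (simp_all add: gp_Suc gp_add gm_comm)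

lemma gp_one [simp]: "gp c0 c1 (1,0) n = (1,0)"
  by (induction n) (simp_all add: gp_Suc)

lemma pcong_gm: "pcong m x x' \<Longrightarrow> pcong m y y' \<Longrightarrow> pcong m (gm c0 c1 x y) (gm c0 c1 x' y')"
  unfolding pcong_def gm_def by (auto intro!: cong_add cong_mult)

lemma pcong_gp: "pcong m x x' \<Longrightarrow> pcong m (gp c0 c1 x n) (gp c0 c1 x' n)"
  by (induction n) (simp_all add: gp_Suc pcong_gm)

lemma gnorm_pcong: "pcong m x y \<Longrightarrow> [gnorm c0 c1 x = gnorm c0 c1 y] (mod m)"
  unfolding pcong_def gnorm_def by (auto intro!: cong_diff cong_add cong_mult cong_pow)

lemma TM_mult:
  assumes m: "odd m"
  shows "pcong m (TM m c1 (gm c0 c1 x y)) (sm (c1 ^ 2 + 4 * c0) (TM m c1 x) (TM m c1 y))"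
proof -
  define h where "h = (m + 1) div 2"
  have h: "2 * h - 1 = m" using m unfolding h_def by presburger
  have 1: "fst (sm (c1 ^ 2 + 4 * c0) (TM m c1 x) (TM m c1 y)) - fst (TM m c1 (gm c0 c1 x y))
     = (2 * h - 1) * (snd x * snd y * (c1 ^ 2 * h + c0 * (2 * h + 1)))"
    unfolding TM_def sm_def gm_def h_def[symmetric] by (simp add: power2_eq_square algebra_simps)
  have 2: "snd (sm (c1 ^ 2 + 4 * c0) (TM m c1 x) (TM m c1 y)) - snd (TM m c1 (gm c0 c1 x y))
     = (2 * h - 1) * (h * c1 * snd x * snd y)"
    unfolding TM_def sm_def gm_def h_def[symmetric] by (simp add: power2_eq_square algebra_simps)
  have "[fst (sm (c1 ^ 2 + 4 * c0) (TM m c1 x) (TM m c1 y)) = fst (TM m c1 (gm c0 c1 x y))] (mod m)"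
    using 1 unfolding h by (simp add: cong_iff_dvd_diff)
  moreover have "[snd (sm (c1 ^ 2 + 4 * c0) (TM m c1 x) (TM m c1 y)) = snd (TM m c1 (gm c0 c1 x y))] (mod m)"
    using 2 unfolding h by (simp add: cong_iff_dvd_diff)
  ultimately show ?thesis by (simp add: pcong_def cong_sym)
qed

lemmas pcong_trans' [trans] = pcong_trans

lemma TM_one [simp]: "TM m c1 (1, 0) = (1, 0)" by (simp add: TM_def)

lemma TM_pow:
  assumes m: "odd m"
  shows "pcong m (TM m c1 (gp c0 c1 x n)) (sp (c1 ^ 2 + 4 * c0) (TM m c1 x) n)"
proof (induction n)
  case 0 then show ?case by simp
next
  case (Suc n)
  have "pcong m (TM m c1 (gp c0 c1 x (Suc n))) (sm (c1 ^ 2 + 4 * c0) (TM m c1 x) (TM m c1 (gp c0 c1 x n)))"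
    unfolding gp_Suc by (rule TM_mult[OF m])
  also have "pcong m (sm (c1 ^ 2 + 4 * c0) (TM m c1 x) (TM m c1 (gp c0 c1 x n))) (sp (c1 ^ 2 + 4 * c0) (TM m c1 x) (Suc n))"
    unfolding sp_Suc by (rule pcong_sm[OF pcong_refl Suc])
  finally show ?case .
qed

lemma TM_norm:
  assumes m: "odd m"
  shows "[snorm (c1 ^ 2 + 4 * c0) (TM m c1 x) = gnorm c0 c1 x] (mod m)"
proof -
  define h where "h = (m + 1) div 2"
  have h: "2 * h - 1 = m" using m unfolding h_def by presburger
  have "snorm (c1 ^ 2 + 4 * c0) (TM m c1 x) - gnorm c0 c1 x
     = (2 * h - 1) * (c1 * fst x * snd x - c0 * snd x ^ 2 * (2 * h + 1))"
    unfolding TM_def snorm_def gnorm_def h_def[symmetric] by (simp add: power2_eq_square algebra_simps)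
  then show ?thesis unfolding h by (simp add: cong_iff_dvd_diff)
qed

lemma TM_inj:
  assumes m: "odd m" and c: "pcong m (TM m c1 x) (TM m c1 y)"
  shows "pcong m x y"
proof -
  define h where "h = (m + 1) div 2"
  have h: "m = 2 * h - 1" using m unfolding h_def by presburger
  have a: "m dvd h * snd x - h * snd y" and b: "m dvd (fst x + h * c1 * snd x) - (fst y + h * c1 * snd y)"
    using c by (simp_all add: pcong_def TM_def cong_iff_dvd_diff h_def)
  have "snd x - snd y = 2 * (h * snd x - h * snd y) - m * (snd x - snd y)"
    by (simp add: h algebra_simps)
  then have s: "m dvd snd x - snd y" using a by (metis dvd_diff dvd_mult dvd_triv_left)
  have "fst x - fst y = ((fst x + h * c1 * snd x) - (fst y + h * c1 * snd y)) - c1 * (h * snd x - h * snd y)"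
    by (simp add: algebra_simps)
  then have f: "m dvd fst x - fst y" using a b by (metis dvd_diff dvd_mult)
  show ?thesis using s f by (simp add: pcong_def cong_iff_dvd_diff)
qed

lemma TM_surj:
  assumes m: "odd m"
  shows "pcong m (TM m c1 (fst y - c1 * snd y, 2 * snd y)) y"
proof -
  define h where "h = (m + 1) div 2"
  have h: "m = 2 * h - 1" using m unfolding h_def by presburger
  have "fst (TM m c1 (fst y - c1 * snd y, 2 * snd y)) - fst y = m * (c1 * snd y)"
    unfolding TM_def h_def[symmetric] by (simp add: h algebra_simps)
  moreover have "snd (TM m c1 (fst y - c1 * snd y, 2 * snd y)) - snd y = m * snd y"
    unfolding TM_def h_def[symmetric] by (simp add: h algebra_simps)
  ultimately show ?thesis by (simp add: pcong_def cong_iff_dvd_diff)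
qed

lemma TM_pcong: "pcong m x y \<Longrightarrow> pcong m (TM m c1 x) (TM m c1 y)"
  unfolding pcong_def TM_def by (auto intro!: cong_add cong_mult)

lemma G_order:
  assumes q: "prime q" "2 < q" and nd: "\<not> int q dvd (c1 ^ 2 + 4 * c0)"
    and N: "[gnorm c0 c1 x = 1] (mod int q)"
  shows "pcong (int q) (gp c0 c1 x (nat (int q - Legendre (c1 ^ 2 + 4 * c0) (int q)))) (1, 0)"
proof -
  define F where "F = nat (int q - Legendre (c1 ^ 2 + 4 * c0) (int q))"
  have oq: "odd (int q)" using q prime_odd_nat by simp
  have "[snorm (c1 ^ 2 + 4 * c0) (TM (int q) c1 x) = 1] (mod int q)"
    using cong_trans[OF TM_norm[OF oq] N] .
  then have A: "pcong (int q) (sp (c1 ^ 2 + 4 * c0) (TM (int q) c1 x) F) (1, 0)"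
    unfolding F_def by (rule order_sm[OF q nd])
  have "pcong (int q) (TM (int q) c1 (gp c0 c1 x F)) (TM (int q) c1 (1, 0))"
    using pcong_trans[OF TM_pow[OF oq] A] by simp
  then show ?thesis unfolding F_def[symmetric] by (rule TM_inj[OF oq])
qed

lemma G_gen:
  assumes q: "prime q" "2 < q" and nd: "\<not> int q dvd (c1 ^ 2 + 4 * c0)"
  shows "\<exists>x. [gnorm c0 c1 x = 1] (mod int q) \<and>
    (\<forall>e. pcong (int q) (gp c0 c1 x e) (1, 0) \<longrightarrow> nat (int q - Legendre (c1 ^ 2 + 4 * c0) (int q)) dvd e)"
proof -
  define d where "d = c1 ^ 2 + 4 * c0"
  have oq: "odd (int q)" using q prime_odd_nat by simp
  obtain y where y1: "[snorm d y = 1] (mod int q)"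
    and y2: "\<forall>e. pcong (int q) (sp d y e) (1, 0) \<longrightarrow> nat (int q - Legendre d (int q)) dvd e"
    using gen_sm[OF q nd] unfolding d_def by blast
  define x where "x = (fst y - c1 * snd y, 2 * snd y)"
  have Tx: "pcong (int q) (TM (int q) c1 x) y" unfolding x_def by (rule TM_surj[OF oq])
  have "[gnorm c0 c1 x = snorm d (TM (int q) c1 x)] (mod int q)"
    unfolding d_def by (rule cong_sym[OF TM_norm[OF oq]])
  also have "[snorm d (TM (int q) c1 x) = snorm d y] (mod int q)" using Tx by (rule snorm_pcong)
  also note y1
  finally have nx: "[gnorm c0 c1 x = 1] (mod int q)" .
  have "nat (int q - Legendre d (int q)) dvd e" if e: "pcong (int q) (gp c0 c1 x e) (1, 0)" for e
  proof -
    have "pcong (int q) (sp d y e) (sp d (TM (int q) c1 x) e)" by (rule pcong_sp[OF pcong_sym[OF Tx]])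
    also have "pcong (int q) (sp d (TM (int q) c1 x) e) (TM (int q) c1 (gp c0 c1 x e))"
      unfolding d_def by (rule pcong_sym[OF TM_pow[OF oq]])
    also have "pcong (int q) (TM (int q) c1 (gp c0 c1 x e)) (TM (int q) c1 (1, 0))" by (rule TM_pcong[OF e])
    finally have "pcong (int q) (sp d y e) (1, 0)" by simp
    then show ?thesis using y2 by blast
  qed
  then show ?thesis using nx unfolding d_def by blast
qed

definition cc0 :: "int \<Rightarrow> int" where "cc0 D = (if D mod 4 = 1 then (D - 1) div 4 else D)"
definition cc1 :: "int \<Rightarrow> int" where "cc1 D = (if D mod 4 = 1 then 1 else 0)"

lemma qmult_gm: "qmult D x y = gm (cc0 D) (cc1 D) x y"
  by (cases x; cases y) (simp add: qmult_def gm_def cc0_def cc1_def)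

lemma qpow_gp: "qpow D x n = gp (cc0 D) (cc1 D) x n"
proof -
  have "qmult D x = gm (cc0 D) (cc1 D) x" by (rule ext) (rule qmult_gm)
  then show ?thesis by (simp add: qpow_def gp_def)
qed

lemma qnorm_gnorm: "qnorm D x = gnorm (cc0 D) (cc1 D) x"
proof (cases "D mod 4 = 1")
  case True
  then have "(1 - D) div 4 = - ((D - 1) div 4)" by presburger
  then show ?thesis using True by (cases x) (simp add: qnorm_def gnorm_def cc0_def cc1_def)
next
  case False
  then show ?thesis by (cases x) (simp add: qnorm_def gnorm_def cc0_def cc1_def)
qed

lemma qcong_pcong: "qcong n x y = pcong (int n) x y"
  by (simp add: qcong_def pcong_def)

lemma delta_eq: "cc1 D ^ 2 + 4 * cc0 D = (if D mod 4 = 1 then D else 4 * D)"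
proof (cases "D mod 4 = 1")
  case True
  then have "1 + 4 * ((D - 1) div 4) = D" by presburger
  then show ?thesis using True by (simp add: cc0_def cc1_def)
qed (simp add: cc0_def cc1_def)

lemma not_dvd_4:
  assumes "prime q" "2 < q" shows "\<not> int q dvd 4"
proof
  assume "int q dvd 4"
  then have "q dvd 4" by presburger
  then have "q dvd 2 * 2" by simp
  then have "q dvd 2" using assms(1) prime_dvd_mult_iff by blast
  then show False using assms(2) by (auto dest: dvd_imp_le)
qed

lemma dvd_4D:
  assumes q: "prime q" "2 < q" shows "int q dvd 4 * D \<longleftrightarrow> int q dvd D"
  using prime_int_dvd_mult[OF q(1), of 4 D] not_dvd_4[OF q] by auto

lemma Legendre_4:
  assumes q: "prime q" "2 < q"
  shows "Legendre (4 * D) (int q) = Legendre D (int q)"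
proof -
  have z: "[4 * D = 0] (mod int q) \<longleftrightarrow> [D = 0] (mod int q)"
    using dvd_4D[OF q] by (simp add: cong_0_iff)
  have "QuadRes (int q) (4 * D) \<longleftrightarrow> QuadRes (int q) D"
  proof
    assume "QuadRes (int q) D"
    then obtain y where "[y ^ 2 = D] (mod int q)" unfolding QuadRes_def by blast
    then have "[4 * y ^ 2 = 4 * D] (mod int q)" by (rule cong_mult[OF cong_refl])
    then have "[(2 * y) ^ 2 = 4 * D] (mod int q)" by (simp add: power_mult_distrib)
    then show "QuadRes (int q) (4 * D)" unfolding QuadRes_def by blast
  next
    assume "QuadRes (int q) (4 * D)"
    then obtain y where y: "[y ^ 2 = 4 * D] (mod int q)" unfolding QuadRes_def by blast
    define h where "h = (int q + 1) div 2"
    have h: "int q = 2 * h - 1" using q prime_odd_nat[OF q(1)] unfolding h_def by presburger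
    have "(h * y) ^ 2 - D = h ^ 2 * (y ^ 2 - 4 * D) + D * (2 * h + 1) * int q"
      unfolding h by (simp add: power2_eq_square algebra_simps)
    moreover have "int q dvd h ^ 2 * (y ^ 2 - 4 * D) + D * (2 * h + 1) * int q"
      using y by (intro dvd_add) (simp_all add: cong_iff_dvd_diff)
    ultimately have "[(h * y) ^ 2 = D] (mod int q)" by (simp add: cong_iff_dvd_diff)
    then show "QuadRes (int q) D" unfolding QuadRes_def by blast
  qed
  then show ?thesis using z by (simp add: Legendre_def)
qed

lemma Legendre_delta:
  assumes q: "prime q" "2 < q"
  shows "Legendre (cc1 D ^ 2 + 4 * cc0 D) (int q) = Legendre D (int q)"
  using Legendre_4[OF q] by (simp add: delta_eq)

lemma nd_delta:
  assumes q: "prime q" "2 < q" and nd: "\<not> int q dvd D"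
  shows "\<not> int q dvd (cc1 D ^ 2 + 4 * cc0 D)"
  using dvd_4D[OF q] nd by (simp add: delta_eq)

lemma kron_prime:
  assumes q: "prime q" "q \<noteq> 2"
  shows "kronecker D q = Legendre D (int q)"
  using q by (simp add: kronecker_def prime_prime_factors multiplicity_prime kronecker_prime_def)

lemma kron_abs: "\<bar>kronecker D n\<bar> \<le> 1"
proof -
  have kp: "\<bar>kronecker_prime D p\<bar> \<le> 1" for p
    by (simp add: kronecker_prime_def Legendre_def)
  have "\<bar>kronecker D n\<bar> = (\<Prod>p\<in>prime_factors n. \<bar>kronecker_prime D p\<bar> ^ multiplicity p n)"
    by (simp add: kronecker_def abs_prod power_abs)
  also have "\<dots> \<le> 1" by (rule prod_le_1) (auto intro: power_le_one kp)
  finally show ?thesis .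
qed

lemma sqf_coprime:
  assumes sq: "squarefree (N::nat)" and p: "prime p" "p dvd N"
  shows "coprime p (N div p)"
proof (rule prime_imp_coprime[OF p(1)], rule notI)
  assume "p dvd N div p"
  then have "p * p dvd p * (N div p)" by simp
  also have "p * (N div p) = N" using p(2) by simp
  finally have "p ^ 2 dvd N" by (simp add: power2_eq_square)
  then have "is_unit p" using sq unfolding squarefree_def by blast
  then show False using p(1) by simp
qed

lemma sqf_cong:
  fixes a b :: int
  assumes "squarefree (N::nat)" "\<And>q. prime q \<Longrightarrow> q dvd N \<Longrightarrow> [a = b] (mod int q)"
  shows "[a = b] (mod int N)"
  using assms
proof (induction N rule: less_induct)
  case (less N)
  show ?case
  proof (cases "N = 1")
    case True then show ?thesis by simp
  next
    case False
    then obtain p where p: "prime p" "p dvd N" using prime_factor_nat by blast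
    have N0: "N \<noteq> 0" using less.prems(1) by (cases "N = 0") auto
    define M where "M = N div p"
    have NM: "N = p * M" using p(2) unfolding M_def by simp
    have cop: "coprime p M" unfolding M_def by (rule sqf_coprime[OF less.prems(1) p])
    have "M < N" using NM N0 p(1) prime_gt_1_nat by (simp add: NM)
    moreover have "squarefree M" using less.prems(1) NM squarefree_multD(2) by blast
    moreover have "[a = b] (mod int q)" if "prime q" "q dvd M" for q
      using less.prems(2)[OF that(1)] that(2) NM by simp
    ultimately have "[a = b] (mod int M)" using less.IH by blast
    moreover have "[a = b] (mod int p)" using less.prems(2) p by blast
    moreover have "coprime (int p) (int M)" using cop by simp
    ultimately have "[a = b] (mod int p * int M)" using coprime_cong_mult by blast
    then show ?thesis using NM by simp
  qed
qed

theorem theorem4p3: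
  fixes D :: int and N :: nat
  assumes "squarefree D"
    and "N > 1" and "odd N" and "squarefree N" and "\<not> prime N"
    and "coprime (int N) D"
  shows "G_carmichael D N \<longleftrightarrow> (\<forall>q::nat. prime q \<and> q dvd N \<longrightarrow> FD D q dvd FD D N)"
proof -
  note N1 = assms(2) and oN = assms(3) and sqN = assms(4) and npN = assms(5) and cop = assms(6)
  define c0 where "c0 = cc0 D"
  define c1 where "c1 = cc1 D"
  define d where "d = c1 ^ 2 + 4 * c0"
  have qfacts: "2 < q \<and> \<not> int q dvd d \<and> FD D q = int q - Legendre d (int q) \<and> FD D q > 0"
    if q: "prime q" "q dvd N" for q
  proof -
    have "q \<noteq> 2" using q oN by auto
    then have q2: "2 < q" using prime_ge_2_nat[OF q(1)] by simp
    have ndD: "\<not> int q dvd D"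
    proof
      assume "int q dvd D"
      moreover have "int q dvd int N" using q(2) by simp
      ultimately have "is_unit (int q)" using cop by (meson coprime_common_divisor)
      then show False using q(1) by simp
    qed
    have nd: "\<not> int q dvd d" unfolding d_def c0_def c1_def by (rule nd_delta[OF q(1) q2 ndD])
    have L: "Legendre d (int q) = Legendre D (int q)" unfolding d_def c0_def c1_def
      by (rule Legendre_delta[OF q(1) q2])
    have F: "FD D q = int q - Legendre d (int q)"
      using kron_prime[OF q(1) \<open>q \<noteq> 2\<close>, of D] L by (simp add: FD_def)
    have "\<bar>Legendre d (int q)\<bar> \<le> 1" by (simp add: Legendre_def)
    then have "FD D q > 0" using F q2 by simp
    then show ?thesis using q2 nd F by simp
  qed
  have FN: "FD D N > 0" using kron_abs[of D N] N1 by (simp add: FD_def)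
  have natdvd: "FD D q dvd FD D N \<longleftrightarrow> nat (FD D q) dvd nat (FD D N)" if "FD D q > 0" for q
    using that FN by (simp add: nat_dvd_iff)
  have basic: "odd N \<and> N > 1 \<and> \<not> prime N \<and> coprime (int N) D" using assms by simp
  show ?thesis
  proof
    assume C: "G_carmichael D N"
    show "\<forall>q. prime q \<and> q dvd N \<longrightarrow> FD D q dvd FD D N"
    proof (intro allI impI, elim conjE)
      fix q assume q: "prime q" "q dvd N"
      note qf = qfacts[OF q]
      obtain \<beta> where b1: "[gnorm c0 c1 \<beta> = 1] (mod int q)"
        and b2: "\<forall>e. pcong (int q) (gp c0 c1 \<beta> e) (1, 0) \<longrightarrow> nat (int q - Legendre d (int q)) dvd e"
        using G_gen[OF q(1)] qf unfolding d_def by blast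
      define M where "M = N div q"
      have NM: "N = q * M" using q(2) unfolding M_def by simp
      have copM: "coprime (int q) (int M)" using sqf_coprime[OF sqN q] unfolding M_def by simp
      obtain u1 where u1: "[u1 = fst \<beta>] (mod int q)" "[u1 = 1] (mod int M)"
        using binary_chinese_remainder_int[OF copM] by blast
      obtain u2 where u2: "[u2 = snd \<beta>] (mod int q)" "[u2 = 0] (mod int M)"
        using binary_chinese_remainder_int[OF copM] by blast
      define \<alpha> where "\<alpha> = (u1 mod int N, u2 mod int N)"
      have aN: "pcong (int N) \<alpha> (u1, u2)" unfolding \<alpha>_def by (simp add: pcong_def cong_def)
      have aq: "pcong (int q) \<alpha> \<beta>"
        using pcong_trans[OF pcong_dvd[OF aN] ] u1 u2 q(2) by (simp add: pcong_def)
      have aNM: "pcong (int M) \<alpha> (u1, u2)" by (rule pcong_dvd[OF aN]) (simp add: NM)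
      have "pcong (int M) (u1, u2) (1, 0)" using u1 u2 by (simp add: pcong_def)
      then have aM: "pcong (int M) \<alpha> (1, 0)" by (rule pcong_trans[OF aNM])
      have "[gnorm c0 c1 \<alpha> = 1] (mod int q)" using cong_trans[OF gnorm_pcong[OF aq] b1] .
      moreover have "[gnorm c0 c1 \<alpha> = 1] (mod int M)" using gnorm_pcong[OF aM] by (simp add: gnorm_def)
      ultimately have "[gnorm c0 c1 \<alpha> = 1] (mod int q * int M)" using copM coprime_cong_mult by blast
      then have nA: "[qnorm D \<alpha> = 1] (mod int N)" using NM by (simp add: qnorm_gnorm c0_def c1_def)
      have "\<alpha> \<in> G_set D N" using nA N1 by (simp add: G_set_def \<alpha>_def)
      then have "pcong (int N) (gp c0 c1 \<alpha> (nat (FD D N))) (1, 0)"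
        using C by (simp add: G_carmichael_def qcong_pcong qpow_gp c0_def c1_def)
      then have "pcong (int q) (gp c0 c1 \<alpha> (nat (FD D N))) (1, 0)" by (rule pcong_dvd) (simp add: q(2))
      then have "pcong (int q) (gp c0 c1 \<beta> (nat (FD D N))) (1, 0)"
        by (rule pcong_trans[OF pcong_gp[OF pcong_sym[OF aq]]])
      then have "nat (FD D q) dvd nat (FD D N)" using b2 qf by simp
      moreover have "FD D q > 0" using qf by simp
      ultimately show "FD D q dvd FD D N" using natdvd by simp
    qed
  next
    assume H: "\<forall>q. prime q \<and> q dvd N \<longrightarrow> FD D q dvd FD D N"
    have "qcong N (qpow D \<alpha> (nat (FD D N))) (1, 0)" if a: "\<alpha> \<in> G_set D N" for \<alpha>
    proof -
      have nA: "[gnorm c0 c1 \<alpha> = 1] (mod int N)"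
        using a by (cases \<alpha>) (simp add: G_set_def qnorm_gnorm c0_def c1_def)
      define z where "z = gp c0 c1 \<alpha> (nat (FD D N))"
      have zq: "pcong (int q) z (1, 0)" if q: "prime q" "q dvd N" for q
      proof -
        note qf = qfacts[OF q]
        have "[gnorm c0 c1 \<alpha> = 1] (mod int q)" using nA q(2) by (intro cong_dvd_modulus[OF nA]) simp
        then have o: "pcong (int q) (gp c0 c1 \<alpha> (nat (FD D q))) (1, 0)"
          using G_order[OF q(1)] qf unfolding d_def by simp
        have qp: "FD D q > 0" using qf by simp
        have "FD D q dvd FD D N" using H q by simp
        then have "nat (FD D q) dvd nat (FD D N)" using natdvd[OF qp] by simp
        then obtain k where k: "nat (FD D N) = nat (FD D q) * k" by blast
        have "pcong (int q) (gp c0 c1 (gp c0 c1 \<alpha> (nat (FD D q))) k) (gp c0 c1 (1, 0) k)"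
          by (rule pcong_gp[OF o])
        then show ?thesis unfolding z_def k gp_mult by simp
      qed
      have "[fst z = 1] (mod int N)" by (rule sqf_cong[OF sqN]) (use zq in \<open>simp add: pcong_def\<close>)
      moreover have "[snd z = 0] (mod int N)" by (rule sqf_cong[OF sqN]) (use zq in \<open>simp add: pcong_def\<close>)
      ultimately show ?thesis by (simp add: qcong_def qpow_gp z_def c0_def c1_def)
    qed
    then show "G_carmichael D N" using basic by (simp add: G_carmichael_def)
  qed
qed

end
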